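(* Let $v=(v^1,\dots,v^N)$ with $v^1=\cdots=v^N$, and suppose $S$ and $A$ are finite. Then for every state $s\in S$, a Nash equilibrium $(\lambda_*,\chi_* )$ in behavioral strategies of the extensive-form game based on $(v^1,\dots,v^N,-v^1,\dots,-v^N)$ under $s$ exists.
   Context: Setting: a Markov game with state perturbation adversaries with agents $1,\dots,N$, state space $S$, joint agent action set $A=A^1\times\cdots\times A^N$, adversary action sets $B^{\tilde i}$ (joint $B$), rewards $r^i:S\times A\times B\to\mathbb R$, transition kernel $p(s'\mid s,a,b)$, and perturbation function $f$; write $f_s(b)=(f(s,b^{\tilde 1}),\dots,f(s,b^{\tilde N}))$, assumed invertible so that $f_s^{-1}$ is defined. $\mathcal B(\epsilon,s)\subset S$ is the ball of radius $\epsilon$ about $s$. The extensive-form game (EFG) based on $(v^1,\dots,v^N,-v^1,\dots,-v^N)$ under $s\in S$ is the finite game tree in which player $P1$ moves first, choosing $\tilde s=(\tilde s^1,\dots,\tilde s^N)\in\tilde S=\mathcal B(\epsilon,s)^N$, and then player $P2$, who observes $\tilde s$, chooses $a\in A$; the payoff vector is $g_s(\tilde s,a)=(g^1_s,\dots,g^N_s)$ with $g^i_s(\tilde s,a)=r^i(s,a,f_s^{-1}(\tilde s))+\sum_{s'}p(s'\mid s,a,f_s^{-1}(\tilde s))v^i(s')$, which $P2$ receives while $P1$ receives $-g_s$. Behavioral strategies are $\lambda(\tilde s\mid s)=\prod_i\lambda^i(\tilde s^i\mid s)$ for $P1$ and $\chi(a\mid\tilde s)=\prod_i\chi^i(a^i\mid\tilde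 s^i)$ for $P2$. With $J^i(\lambda,\chi)=\mathbb E_{\lambda,\chi}[g^i_s]$, a pair $(\lambda_*,\chi_* )$ is a Nash equilibrium in behavioral strategies if for all $i$, all $\lambda,\chi$: $J^i(\lambda^i,\lambda_*^{-i},\chi_* )\ge J^i(\lambda_*,\chi_* )\ge J^i(\lambda_*,\chi^i,\chi_*^{-i})$. *)

theory Defs
  imports "HOL-Analysis.Analysis"
begin

text \<open>Agents are indexed by a finite type 'i (N = CARD('i)); joint objects are
functions on 'i. The state space is a finite set S in a metric space 'st.\<close>

definition pball :: "'st::metric_space set \<Rightarrow> 'st \<Rightarrow> real \<Rightarrow> 'st set" where
  "pball S s \<epsilon> = S \<inter> ball s \<epsilon>"

definition fjoint :: "('st \<Rightarrow> 'b \<Rightarrow> 'st) \<Rightarrow> 'st \<Rightarrow> ('i \<Rightarrow> 'b) \<Rightarrow> ('i \<Rightarrow> 'st)" where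
  "fjoint f s b = (\<lambda>j. f s (b j))"

definition is_dist :: "'x set \<Rightarrow> ('x \<Rightarrow> real) \<Rightarrow> bool" where
  "is_dist X d \<longleftrightarrow> (\<forall>x\<in>X. 0 \<le> d x) \<and> sum d X = 1"

definition adv_strat :: "'st set \<Rightarrow> ('i \<Rightarrow> 'st \<Rightarrow> real) \<Rightarrow> bool" where
  "adv_strat Bl lam \<longleftrightarrow> (\<forall>i. is_dist Bl (lam i))"

text \<open>P2 behavioral strategy: chi i st is, for each observed perturbed state st of agent i,
a distribution over A^i.\<close>
definition agent_strat :: "'st set \<Rightarrow> ('i \<Rightarrow> 'a set) \<Rightarrow> ('i \<Rightarrow> 'st \<Rightarrow> 'a \<Rightarrow> real) \<Rightarrow> bool" where
  "agent_strat Bl As chi \<longleftrightarrow> (\<forall>i. \<forall>st\<in>Bl. is_dist (As i) (chi i st))"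

definition efg_payoff ::
  "'st set \<Rightarrow> ('i \<Rightarrow> 'st \<Rightarrow> ('i \<Rightarrow> 'a) \<Rightarrow> ('i \<Rightarrow> 'b) \<Rightarrow> real)
   \<Rightarrow> ('st \<Rightarrow> ('i \<Rightarrow> 'a) \<Rightarrow> ('i \<Rightarrow> 'b) \<Rightarrow> 'st \<Rightarrow> real)
   \<Rightarrow> ('i \<Rightarrow> 'st \<Rightarrow> real) \<Rightarrow> ('i \<Rightarrow> 'b set) \<Rightarrow> ('st \<Rightarrow> 'b \<Rightarrow> 'st)
   \<Rightarrow> 'st \<Rightarrow> 'i \<Rightarrow> ('i \<Rightarrow> 'st) \<Rightarrow> ('i \<Rightarrow> 'a) \<Rightarrow> real" where
  "efg_payoff S r p v Bs f s i st a =
     (let b = inv_into (Pi\<^sub>E UNIV Bs) (fjoint f s) st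
      in r i s a b + (\<Sum>s'\<in>S. p s a b s' * v i s'))"

definition efg_J ::
  "'st::metric_space set \<Rightarrow> ('i::finite \<Rightarrow> 'a set)
   \<Rightarrow> ('i \<Rightarrow> 'st \<Rightarrow> ('i \<Rightarrow> 'a) \<Rightarrow> ('i \<Rightarrow> 'b) \<Rightarrow> real)
   \<Rightarrow> ('st \<Rightarrow> ('i \<Rightarrow> 'a) \<Rightarrow> ('i \<Rightarrow> 'b) \<Rightarrow> 'st \<Rightarrow> real)
   \<Rightarrow> ('i \<Rightarrow> 'st \<Rightarrow> real) \<Rightarrow> ('i \<Rightarrow> 'b set) \<Rightarrow> ('st \<Rightarrow> 'b \<Rightarrow> 'st) \<Rightarrow> real
   \<Rightarrow> 'st \<Rightarrow> 'i \<Rightarrow> ('i \<Rightarrow> 'st \<Rightarrow> real) \<Rightarrow> ('i \<Rightarrow> 'st \<Rightarrow> 'a \<Rightarrow> real) \<Rightarrow> real" where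
  "efg_J S As r p v Bs f \<epsilon> s i lam chi =
     (\<Sum>st\<in>Pi\<^sub>E UNIV (\<lambda>_. pball S s \<epsilon>). \<Sum>a\<in>Pi\<^sub>E UNIV As.
        (\<Prod>j\<in>UNIV. lam j (st j)) * (\<Prod>j\<in>UNIV. chi j (st j) (a j))
        * efg_payoff S r p v Bs f s i st a)"

definition efg_nash where
  "efg_nash S As r p v Bs f \<epsilon> s lam chi \<longleftrightarrow>
     adv_strat (pball S s \<epsilon>) lam \<and> agent_strat (pball S s \<epsilon>) As chi \<and>
     (\<forall>i. (\<forall>l. is_dist (pball S s \<epsilon>) l \<longrightarrow>
             efg_J S As r p v Bs f \<epsilon> s i (lam(i := l)) chi \<ge> efg_J S As r p v Bs f \<epsilon> s i lam chi) \<and>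
          (\<forall>c. (\<forall>st\<in>pball S s \<epsilon>. is_dist (As i) (c st)) \<longrightarrow>
             efg_J S As r p v Bs f \<epsilon> s i lam chi \<ge> efg_J S As r p v Bs f \<epsilon> s i lam (chi(i := c))))"

end

theory Submission
  imports Defs "HOL-Homology.Homology"
begin

definition nrm :: "nat \<Rightarrow> (nat \<Rightarrow> real) \<Rightarrow> real" where
  "nrm n y = sqrt (\<Sum>i\<le>n. y i ^ 2)"

definition nz :: "nat \<Rightarrow> (nat \<Rightarrow> real) \<Rightarrow> nat \<Rightarrow> real" where
  "nz n y = (\<lambda>i. y i / nrm n y)"

lemma cont_nz:
  assumes "continuous_on T F" and "\<And>p. p \<in> T \<Longrightarrow> nrm n (F p) \<noteq> 0"
  shows "continuous_on T (\<lambda>p. nz n (F p))"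
  unfolding nz_def nrm_def
proof (intro continuous_on_coordinatewise_then_product continuous_on_divide continuous_intros)
  fix i show "continuous_on T (\<lambda>x. F x i)"
    by (rule continuous_on_product_then_coordinatewise[OF assms(1)])
next
qed (use assms(2) continuous_on_product_then_coordinatewise[OF assms(1)] in \<open>auto simp: nrm_def\<close>)

lemma nrm_pos:
  assumes "nrm n y \<noteq> 0" shows "nrm n y > 0"
  using assms unfolding nrm_def by (simp add: sum_nonneg order_le_neq_trans)

lemma nz_sph:
  assumes "nrm n y \<noteq> 0" "\<forall>i>n. y i = 0"
  shows "(\<Sum>i\<le>n. nz n y i ^ 2) = 1 \<and> (\<forall>i>n. nz n y i = 0)"
proof -
  have p: "nrm n y > 0" using nrm_pos assms by blast
  have s: "(\<Sum>i\<le>n. y i ^ 2) = nrm n y ^ 2" unfolding nrm_def by (simp add: sum_nonneg)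
  have "(\<Sum>i\<le>n. nz n y i ^ 2) = (\<Sum>i\<le>n. y i ^ 2) / nrm n y ^ 2"
    unfolding nz_def by (simp add: power_divide sum_divide_distrib)
  also have "\<dots> = 1" using s p by simp
  finally show ?thesis using assms(2) by (simp add: nz_def)
qed

lemma nz_id:
  assumes "(\<Sum>i\<le>n. y i ^ 2) = 1" shows "nz n y = y"
  using assms by (simp add: nz_def nrm_def)

lemma nrm_zero:
  assumes "nrm n y = 0" shows "\<forall>i\<le>n. y i = 0"
proof -
  have "(\<Sum>i\<le>n. y i ^ 2) = 0" using assms unfolding nrm_def by simp
  then have "\<forall>i\<in>{..n}. y i ^ 2 = 0" by (subst sum_nonneg_eq_0_iff[symmetric]) auto
  then show ?thesis by simp
qed

lemma nsphere_eq: "nsphere n = top_of_set {x. (\<Sum>i\<le>n. x i ^ 2) = 1 \<and> (\<forall>i>n. x i = 0)}"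
  by (simp add: nsphere euclidean_product_topology)

lemma brouwer_disc:
  fixes f :: "(nat \<Rightarrow> real) \<Rightarrow> (nat \<Rightarrow> real)"
  assumes cont: "continuous_on {x. (\<Sum>i\<le>n. x i ^ 2) \<le> 1 \<and> (\<forall>i>n. x i = 0)} f"
    and fD: "f ` {x. (\<Sum>i\<le>n. x i ^ 2) \<le> 1 \<and> (\<forall>i>n. x i = 0)} \<subseteq> {x. (\<Sum>i\<le>n. x i ^ 2) \<le> 1 \<and> (\<forall>i>n. x i = 0)}"
  shows "\<exists>x\<in>{x. (\<Sum>i\<le>n. x i ^ 2) \<le> 1 \<and> (\<forall>i>n. x i = 0)}. f x = x"
proof (rule ccontr)
  define D where "D = {x::nat\<Rightarrow>real. (\<Sum>i\<le>n. x i ^ 2) \<le> 1 \<and> (\<forall>i>n. x i = 0)}"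
  define Sph where "Sph = {x::nat\<Rightarrow>real. (\<Sum>i\<le>n. x i ^ 2) = 1 \<and> (\<forall>i>n. x i = 0)}"
  assume "\<not> (\<exists>x\<in>{x. (\<Sum>i\<le>n. x i ^ 2) \<le> 1 \<and> (\<forall>i>n. x i = 0)}. f x = x)"
  then have nf: "\<And>x. x \<in> D \<Longrightarrow> f x \<noteq> x" unfolding D_def by blast
  have SD: "Sph \<subseteq> D" unfolding Sph_def D_def by auto
  have fD': "\<And>x. x \<in> D \<Longrightarrow> f x \<in> D" using fD unfolding D_def by blast
  have cf: "\<And>i. continuous_on D (\<lambda>x. f x i)"
    using continuous_on_product_then_coordinatewise[OF cont] unfolding D_def by blast
  define g where "g = (\<lambda>x. nz n (\<lambda>i. x i - f x i))"
  define F1 where "F1 = (\<lambda>p::real \<times> (nat \<Rightarrow> real). (\<lambda>i. snd p i - fst p * f (snd p) i))"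
  have F1nz: "nrm n (F1 p) \<noteq> 0" if pT: "p \<in> {0..1} \<times> Sph" for p
  proof
    assume "nrm n (F1 p) = 0"
    then have z: "\<forall>i\<le>n. snd p i = fst p * f (snd p) i" using nrm_zero unfolding F1_def by force
    obtain t x where p: "p = (t,x)" "0 \<le> t" "t \<le> 1" "x \<in> Sph" using pT by (cases p) auto
    have xD: "x \<in> D" using p SD by auto
    have fx: "f x \<in> D" using fD' xD by blast
    show False
    proof (cases "t = 1")
      case True
      have "f x i = x i" for i
      proof (cases "i \<le> n")
        case True then show ?thesis using z p \<open>t = 1\<close> by simp
      next
        case False then show ?thesis using fx xD unfolding D_def by simp
      qed
      then have "f x = x" by (simp add: fun_eq_iff)
      then show False using nf xD by blast
    next
      case False
      then have t1: "t < 1" using p by simp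
      have "1 = (\<Sum>i\<le>n. x i ^ 2)" using p unfolding Sph_def by simp
      also have "\<dots> = (\<Sum>i\<le>n. t^2 * f x i ^ 2)" using z p by (simp add: power_mult_distrib)
      also have "\<dots> = t^2 * (\<Sum>i\<le>n. f x i ^ 2)" by (simp add: sum_distrib_left)
      also have "\<dots> \<le> t^2 * 1" using fx unfolding D_def by (intro mult_left_mono) auto
      also have "\<dots> < 1" using t1 p by (simp add: power_less_one_iff)
      finally show False by simp
    qed
  qed
  have csnd: "continuous_on ({0..1} \<times> Sph) (\<lambda>x::real\<times>(nat\<Rightarrow>real). snd x i)" for i
    by (rule continuous_on_product_then_coordinatewise[OF continuous_on_snd[OF continuous_on_id]])
  have cfs: "continuous_on ({0..1} \<times> Sph) (\<lambda>x::real\<times>(nat\<Rightarrow>real). f (snd x) i)" for i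
  proof (rule continuous_on_compose2[OF cf[of i]])
    show "continuous_on ({0..1} \<times> Sph) (snd::real\<times>(nat\<Rightarrow>real) \<Rightarrow> _)" by (rule continuous_on_snd[OF continuous_on_id])
    show "snd ` ({0..1} \<times> Sph) \<subseteq> D" using SD by auto
  qed
  have cF1: "continuous_on ({0..1} \<times> Sph) F1"
    unfolding F1_def
    by (intro continuous_on_coordinatewise_then_product continuous_on_diff continuous_on_mult csnd cfs continuous_on_fst continuous_on_id)
  have nsS: "nsphere n = top_of_set Sph" unfolding Sph_def by (rule nsphere_eq)
  have h1: "homotopic_with (\<lambda>x. True) (nsphere n) (nsphere n) id g"
    unfolding nsS
  proof (rule iffD2[OF homotopic_with], simp, intro exI[where x="\<lambda>p. nz n (F1 p)"] conjI ballI)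
    show "continuous_map (prod_topology (top_of_set {0..1}) (top_of_set Sph)) (top_of_set Sph) (\<lambda>p. nz n (F1 p))"
      unfolding prod_topology_subtopology_eu continuous_map_subtopology_eu
    proof
      show "continuous_on ({0..1} \<times> Sph) (\<lambda>p. nz n (F1 p))" by (rule cont_nz[OF cF1 F1nz])
      show "(\<lambda>p. nz n (F1 p)) \<in> {0..1} \<times> Sph \<rightarrow> Sph"
      proof
        fix p :: "real \<times> (nat \<Rightarrow> real)" assume pT: "p \<in> {0..1} \<times> Sph"
        then have "snd p \<in> D" using SD by auto
        then have "\<forall>i>n. F1 p i = 0" using fD' pT unfolding F1_def D_def Sph_def by auto
        then show "nz n (F1 p) \<in> Sph" using nz_sph[OF F1nz[OF pT]] unfolding Sph_def by auto
      qed
    qed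
  next
    fix x assume "x \<in> topspace (top_of_set Sph)"
    then have "(\<Sum>i\<le>n. x i ^ 2) = 1" unfolding Sph_def by simp
    then show "nz n (F1 (0, x)) = id x" unfolding F1_def by (simp add: nz_id)
  next
    fix x show "nz n (F1 (1, x)) = g x" unfolding F1_def g_def by simp
  qed simp
  define F2 where "F2 = (\<lambda>p::real \<times> (nat \<Rightarrow> real). (\<lambda>i. fst p * snd p i - f (\<lambda>j. fst p * snd p j) i))"
  have tD: "(\<lambda>j. fst p * snd p j) \<in> D" if pT: "p \<in> {0..1} \<times> Sph" for p :: "real \<times> (nat \<Rightarrow> real)"
  proof -
    obtain t x where p: "p = (t,x)" "0 \<le> t" "t \<le> 1" "x \<in> Sph" using pT by (cases p) auto
    have "(\<Sum>i\<le>n. (t * x i) ^ 2) = t^2 * (\<Sum>i\<le>n. x i ^ 2)" by (simp add: power_mult_distrib sum_distrib_left)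
    also have "\<dots> = t^2" using p unfolding Sph_def by simp
    also have "\<dots> \<le> 1" using p by (simp add: power_le_one)
    finally show ?thesis using p unfolding D_def Sph_def by simp
  qed
  have F2nz: "nrm n (F2 p) \<noteq> 0" if pT: "p \<in> {0..1} \<times> Sph" for p
  proof
    assume "nrm n (F2 p) = 0"
    then have z: "\<forall>i\<le>n. fst p * snd p i = f (\<lambda>j. fst p * snd p j) i" using nrm_zero unfolding F2_def by force
    have d: "(\<lambda>j. fst p * snd p j) \<in> D" by (rule tD[OF pT])
    then have fd: "f (\<lambda>j. fst p * snd p j) \<in> D" by (rule fD')
    have "f (\<lambda>j. fst p * snd p j) i = fst p * snd p i" for i
    proof (cases "i \<le> n")
      case True then show ?thesis using z by simp
    next
      case False then show ?thesis using d fd unfolding D_def by simp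
    qed
    then have "f (\<lambda>j. fst p * snd p j) = (\<lambda>j. fst p * snd p j)" by (simp add: fun_eq_iff)
    then show False using nf d by blast
  qed
  have cF2: "continuous_on ({0..1} \<times> Sph) F2"
    unfolding F2_def
  proof (intro continuous_on_coordinatewise_then_product continuous_on_diff continuous_on_mult csnd continuous_on_fst continuous_on_id)
    fix i
    show "continuous_on ({0..1} \<times> Sph) (\<lambda>x::real\<times>(nat\<Rightarrow>real). f (\<lambda>j. fst x * snd x j) i)"
    proof (rule continuous_on_compose2[OF cf[of i]])
      show "continuous_on ({0..1} \<times> Sph) (\<lambda>x::real\<times>(nat\<Rightarrow>real). (\<lambda>j. fst x * snd x j))"
        by (intro continuous_on_coordinatewise_then_product continuous_on_mult csnd continuous_on_fst continuous_on_id)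
      show "(\<lambda>x::real\<times>(nat\<Rightarrow>real). (\<lambda>j. fst x * snd x j)) ` ({0..1} \<times> Sph) \<subseteq> D" using tD by blast
    qed
  qed
  define c where "c = nz n (\<lambda>i. - f (\<lambda>j. 0) i)"
  have h2: "homotopic_with (\<lambda>x. True) (nsphere n) (nsphere n) (\<lambda>x. c) g"
    unfolding nsS
  proof (rule iffD2[OF homotopic_with], simp, intro exI[where x="\<lambda>p. nz n (F2 p)"] conjI ballI)
    show "continuous_map (prod_topology (top_of_set {0..1}) (top_of_set Sph)) (top_of_set Sph) (\<lambda>p. nz n (F2 p))"
      unfolding prod_topology_subtopology_eu continuous_map_subtopology_eu
    proof
      show "continuous_on ({0..1} \<times> Sph) (\<lambda>p. nz n (F2 p))" by (rule cont_nz[OF cF2 F2nz])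
      show "(\<lambda>p. nz n (F2 p)) \<in> {0..1} \<times> Sph \<rightarrow> Sph"
      proof
        fix p :: "real \<times> (nat \<Rightarrow> real)" assume pT: "p \<in> {0..1} \<times> Sph"
        have d: "(\<lambda>j. fst p * snd p j) \<in> D" by (rule tD[OF pT])
        then have fd: "f (\<lambda>j. fst p * snd p j) \<in> D" by (rule fD')
        have "\<forall>i>n. F2 p i = 0" using d fd unfolding F2_def D_def by auto
        then show "nz n (F2 p) \<in> Sph" using nz_sph[OF F2nz[OF pT]] unfolding Sph_def by auto
      qed
    qed
  next
    fix x show "nz n (F2 (0, x)) = c" unfolding F2_def c_def by simp
  next
    fix x show "nz n (F2 (1, x)) = g x" unfolding F2_def g_def by simp
  qed simp
  have "homotopic_with (\<lambda>x. True) (nsphere n) (nsphere n) id (\<lambda>x. c)"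
    using homotopic_with_trans[OF h1 homotopic_with_sym[THEN iffD1, OF h2]] .
  then have "contractible_space (nsphere n)" unfolding contractible_space_def by blast
  then show False using non_contractible_space_nsphere by blast
qed
lemma brouwer_box:
  fixes F :: "(nat \<Rightarrow> real) \<Rightarrow> (nat \<Rightarrow> real)"
  assumes cont: "continuous_on {x. (\<forall>j<m. 0 \<le> x j \<and> x j \<le> 1) \<and> (\<forall>j\<ge>m. x j = 0)} F"
    and FB: "F ` {x. (\<forall>j<m. 0 \<le> x j \<and> x j \<le> 1) \<and> (\<forall>j\<ge>m. x j = 0)} \<subseteq> {x. (\<forall>j<m. 0 \<le> x j \<and> x j \<le> 1) \<and> (\<forall>j\<ge>m. x j = 0)}"
  shows "\<exists>x\<in>{x. (\<forall>j<m. 0 \<le> x j \<and> x j \<le> 1) \<and> (\<forall>j\<ge>m. x j = 0)}. F x = x"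
proof -
  define B where "B = {x::nat\<Rightarrow>real. (\<forall>j<m. 0 \<le> x j \<and> x j \<le> 1) \<and> (\<forall>j\<ge>m. x j = 0)}"
  define D where "D = {x::nat\<Rightarrow>real. (\<Sum>i\<le>m. x i ^ 2) \<le> 1 \<and> (\<forall>i>m. x i = 0)}"
  define c :: real where "c = 1 / (real m + 1)"
  have c0: "c > 0" unfolding c_def by simp
  define \<kappa> where "\<kappa> = (\<lambda>y::nat\<Rightarrow>real. \<lambda>j. if j < m then max 0 (min 1 (y j / c)) else 0)"
  define G where "G = (\<lambda>y. \<lambda>j. c * F (\<kappa> y) j)"
  have kB: "\<kappa> y \<in> B" for y unfolding \<kappa>_def B_def by auto
  have FB': "F x \<in> B" if "x \<in> B" for x using FB that unfolding B_def by blast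
  have ck: "continuous_on UNIV \<kappa>"
    unfolding \<kappa>_def
  proof (intro continuous_on_coordinatewise_then_product)
    fix j show "continuous_on UNIV (\<lambda>x::nat\<Rightarrow>real. if j < m then max 0 (min 1 (x j / c)) else 0)"
    proof (cases "j < m")
      case True
      have "continuous_on UNIV (\<lambda>x::nat\<Rightarrow>real. max 0 (min 1 (x j / c)))"
        by (intro continuous_on_max continuous_on_min continuous_on_const continuous_on_divide continuous_on_product_coordinates) (use c0 in auto)
      then show ?thesis using True by simp
    qed simp
  qed
  have cG: "continuous_on D G"
    unfolding G_def
  proof (intro continuous_on_coordinatewise_then_product continuous_on_mult continuous_on_const)
    fix j
    show "continuous_on D (\<lambda>x. F (\<kappa> x) j)"
    proof (rule continuous_on_compose2[of B "\<lambda>x. F x j"])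
      show "continuous_on B (\<lambda>x. F x j)" using continuous_on_product_then_coordinatewise[OF cont] unfolding B_def by blast
      show "continuous_on D \<kappa>" using ck by (rule continuous_on_subset) simp
      show "\<kappa> ` D \<subseteq> B" using kB by blast
    qed
  qed
  have GD: "G ` D \<subseteq> D"
  proof
    fix z assume "z \<in> G ` D"
    then obtain y where z: "z = G y" by blast
    have Fk: "F (\<kappa> y) \<in> B" using FB' kB by blast
    have "(\<Sum>i\<le>m. z i ^ 2) \<le> (\<Sum>i\<le>m. c ^ 2)"
    proof (rule sum_mono)
      fix i assume "i \<in> {..m}"
      have "0 \<le> F (\<kappa> y) i \<and> F (\<kappa> y) i \<le> 1" using Fk unfolding B_def by (cases "i < m") auto
      then have "(c * F (\<kappa> y) i) ^ 2 \<le> (c * 1) ^ 2" using c0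
        by (intro power_mono mult_left_mono) auto
      then show "z i ^ 2 \<le> c ^ 2" unfolding z G_def by simp
    qed
    also have "\<dots> = (real m + 1) * c ^ 2" by simp
    also have "\<dots> = 1 / (real m + 1)" unfolding c_def by (simp add: power2_eq_square)
    also have "\<dots> \<le> 1" by simp
    finally have "(\<Sum>i\<le>m. z i ^ 2) \<le> 1" .
    moreover have "\<forall>i>m. z i = 0" using Fk unfolding z G_def B_def by simp
    ultimately show "z \<in> D" unfolding D_def by simp
  qed
  obtain y where y: "y \<in> D" "G y = y"
    using brouwer_disc[of m G] cG GD unfolding D_def by blast
  have "F (\<kappa> y) = \<kappa> y"
  proof
    fix j
    have Fk: "F (\<kappa> y) \<in> B" using FB' kB by blast
    show "F (\<kappa> y) j = \<kappa> y j"
    proof (cases "j < m")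
      case True
      have yj: "y j = c * F (\<kappa> y) j" using y(2) unfolding G_def by (metis)
      have "y j / c = F (\<kappa> y) j" using yj c0 by simp
      moreover have "0 \<le> F (\<kappa> y) j \<and> F (\<kappa> y) j \<le> 1" using Fk True unfolding B_def by auto
      ultimately show ?thesis using True unfolding \<kappa>_def by simp
    next
      case False then show ?thesis using Fk unfolding \<kappa>_def B_def by simp
    qed
  qed
  then show ?thesis using kB unfolding B_def by blast
qed


lemma cc2: "continuous_on U (\<lambda>\<sigma>::'k \<Rightarrow> 'e \<Rightarrow> real. \<sigma> k e)"
  using continuous_on_product_then_coordinatewise[OF continuous_on_product_then_coordinatewise[OF continuous_on_id], of U k e]
  by simp

lemma cc1: "continuous_on U (\<lambda>x::nat \<Rightarrow> real. x j)"
  using continuous_on_product_then_coordinatewise[OF continuous_on_id, of U j] by simp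

lemma dist_le1: "is_dist X d \<Longrightarrow> finite X \<Longrightarrow> x \<in> X \<Longrightarrow> 0 \<le> d x \<and> d x \<le> 1"
  unfolding is_dist_def using member_le_sum[of x X d] by auto

lemma fixpoint_simplices:
  fixes \<Phi> :: "('k \<Rightarrow> 'e \<Rightarrow> real) \<Rightarrow> ('k \<Rightarrow> 'e \<Rightarrow> real)"
  assumes finK: "finite K" and finE: "\<And>k. k \<in> K \<Longrightarrow> finite (E k)" and neE: "\<And>k. k \<in> K \<Longrightarrow> E k \<noteq> {}"
    and cont: "continuous_on {\<sigma>. (\<forall>k\<in>K. is_dist (E k) (\<sigma> k)) \<and> (\<forall>k e. \<not>(k \<in> K \<and> e \<in> E k) \<longrightarrow> \<sigma> k e = 0)} \<Phi>"
    and maps: "\<Phi> ` {\<sigma>. (\<forall>k\<in>K. is_dist (E k) (\<sigma> k)) \<and> (\<forall>k e. \<not>(k \<in> K \<and> e \<in> E k) \<longrightarrow> \<sigma> k e = 0)}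
               \<subseteq> {\<sigma>. (\<forall>k\<in>K. is_dist (E k) (\<sigma> k)) \<and> (\<forall>k e. \<not>(k \<in> K \<and> e \<in> E k) \<longrightarrow> \<sigma> k e = 0)}"
  shows "\<exists>\<sigma>\<in>{\<sigma>. (\<forall>k\<in>K. is_dist (E k) (\<sigma> k)) \<and> (\<forall>k e. \<not>(k \<in> K \<and> e \<in> E k) \<longrightarrow> \<sigma> k e = 0)}. \<Phi> \<sigma> = \<sigma>"
proof -
  define Q where "Q = {\<sigma>. (\<forall>k\<in>K. is_dist (E k) (\<sigma> k)) \<and> (\<forall>k e. \<not>(k \<in> K \<and> e \<in> E k) \<longrightarrow> \<sigma> k e = 0)}"
  have contQ: "continuous_on Q \<Phi>" using cont unfolding Q_def .
  have mapsQ: "\<Phi> ` Q \<subseteq> Q" using maps unfolding Q_def .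
  define C where "C = Sigma K E"
  have finC: "finite C" unfolding C_def using finK finE by (rule finite_SigmaI)
  define m where "m = card C"
  obtain h where h: "bij_betw h {0..<m} C" using ex_bij_betw_nat_finite[OF finC] unfolding m_def by blast
  define idx where "idx = the_inv_into {0..<m} h"
  have hC: "j < m \<Longrightarrow> h j \<in> C" for j using h by (auto simp: bij_betw_def)
  have idxC: "q \<in> C \<Longrightarrow> idx q < m \<and> h (idx q) = q" for q
    using h f_the_inv_into_f_bij_betw[OF h] bij_betw_the_inv_into[OF h] unfolding idx_def
    by (metis atLeastLessThan_iff bij_betwE)
  define enc where "enc = (\<lambda>\<sigma>::'k \<Rightarrow> 'e \<Rightarrow> real. \<lambda>j. if j < m then \<sigma> (fst (h j)) (snd (h j)) else 0)"
  define dec where "dec = (\<lambda>x::nat \<Rightarrow> real. \<lambda>k e. if (k, e) \<in> C then x (idx (k, e)) else 0)"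
  define ssum where "ssum = (\<lambda>(\<sigma>::'k \<Rightarrow> 'e \<Rightarrow> real) k. \<Sum>e\<in>E k. \<sigma> k e)"
  define \<rho> where "\<rho> = (\<lambda>\<sigma>::'k \<Rightarrow> 'e \<Rightarrow> real. \<lambda>k e. if (k, e) \<in> C then
      (\<sigma> k e + max 0 (1 - ssum \<sigma> k) / real (card (E k))) / max 1 (ssum \<sigma> k) else 0)"
  define B where "B = {x::nat\<Rightarrow>real. (\<forall>j<m. 0 \<le> x j \<and> x j \<le> 1) \<and> (\<forall>j\<ge>m. x j = 0)}"
  have Qbd: "\<sigma> \<in> Q \<Longrightarrow> (k, e) \<in> C \<Longrightarrow> 0 \<le> \<sigma> k e \<and> \<sigma> k e \<le> 1" for \<sigma> k e
  proof -
    assume "\<sigma> \<in> Q" "(k, e) \<in> C"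
    then have "k \<in> K" "e \<in> E k" "is_dist (E k) (\<sigma> k)" unfolding Q_def C_def by auto
    then show ?thesis using dist_le1[of "E k" "\<sigma> k" e] finE[of k] by simp
  qed
  have encB: "\<sigma> \<in> Q \<Longrightarrow> enc \<sigma> \<in> B" for \<sigma>
  proof -
    assume sQ: "\<sigma> \<in> Q"
    have "0 \<le> enc \<sigma> j \<and> enc \<sigma> j \<le> 1" if "j < m" for j
    proof -
      have "(fst (h j), snd (h j)) \<in> C" using hC[OF that] by simp
      then show ?thesis using Qbd[OF sQ] that unfolding enc_def by simp
    qed
    then show "enc \<sigma> \<in> B" unfolding B_def enc_def by simp
  qed
  have decenc: "\<sigma> \<in> Q \<Longrightarrow> dec (enc \<sigma>) = \<sigma>" for \<sigma>
  proof (intro ext)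
    fix k e assume sQ: "\<sigma> \<in> Q"
    show "dec (enc \<sigma>) k e = \<sigma> k e"
    proof (cases "(k, e) \<in> C")
      case True
      then show ?thesis using idxC[OF True] unfolding dec_def enc_def by simp
    next
      case False
      then show ?thesis using sQ unfolding dec_def Q_def C_def by auto
    qed
  qed
  have rhoQ: "\<rho> \<sigma> \<in> Q" if nn: "\<And>k e. 0 \<le> \<sigma> k e" for \<sigma>
  proof -
    have "is_dist (E k) (\<rho> \<sigma> k)" if kK: "k \<in> K" for k
    proof -
      have cpos: "real (card (E k)) > 0" using finE[OF kK] neE[OF kK] by (simp add: card_gt_0_iff)
      have s0: "0 \<le> ssum \<sigma> k" unfolding ssum_def by (intro sum_nonneg nn)
      define M where "M = max 1 (ssum \<sigma> k)"
      define d where "d = max 0 (1 - ssum \<sigma> k)"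
      have M1: "M \<ge> 1" unfolding M_def by simp
      have dM: "ssum \<sigma> k + d = M" unfolding M_def d_def by (simp add: max_def)
      have rk: "\<rho> \<sigma> k e = (\<sigma> k e + d / real (card (E k))) / M" if "e \<in> E k" for e
        unfolding \<rho>_def M_def d_def C_def using kK that by simp
      have "(\<Sum>e\<in>E k. \<rho> \<sigma> k e) = (\<Sum>e\<in>E k. (\<sigma> k e + d / real (card (E k))) / M)"
        by (rule sum.cong) (simp_all add: rk)
      also have "\<dots> = (\<Sum>e\<in>E k. (\<sigma> k e + d / real (card (E k)))) / M"
        by (rule sum_divide_distrib[symmetric])
      also have "(\<Sum>e\<in>E k. (\<sigma> k e + d / real (card (E k)))) = ssum \<sigma> k + real (card (E k)) * (d / real (card (E k)))"
        unfolding ssum_def by (simp only: sum.distrib sum_constant)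
      also have "real (card (E k)) * (d / real (card (E k))) = d" using cpos by simp
      also have "(ssum \<sigma> k + d) / M = 1" using dM M1 by simp
      finally have "sum (\<rho> \<sigma> k) (E k) = 1" .
      moreover have "\<forall>e\<in>E k. 0 \<le> \<rho> \<sigma> k e"
      proof
        fix e assume eE: "e \<in> E k"
        have "0 \<le> d / real (card (E k))" unfolding d_def using cpos by simp
        then have "0 \<le> \<sigma> k e + d / real (card (E k))" using nn[of k e] by linarith
        then show "0 \<le> \<rho> \<sigma> k e" using rk[OF eE] M1 by simp
      qed
      ultimately show ?thesis unfolding is_dist_def by simp
    qed
    moreover have "\<forall>k e. \<not>(k \<in> K \<and> e \<in> E k) \<longrightarrow> \<rho> \<sigma> k e = 0" unfolding \<rho>_def C_def by auto
    ultimately show ?thesis unfolding Q_def by blast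
  qed
  have rhoid: "\<sigma> \<in> Q \<Longrightarrow> \<rho> \<sigma> = \<sigma>" for \<sigma>
  proof (intro ext)
    fix k e assume sQ: "\<sigma> \<in> Q"
    show "\<rho> \<sigma> k e = \<sigma> k e"
    proof (cases "(k, e) \<in> C")
      case True
      then have "k \<in> K" unfolding C_def by auto
      then have "ssum \<sigma> k = 1" using sQ unfolding Q_def ssum_def is_dist_def by auto
      then show ?thesis using True unfolding \<rho>_def by simp
    next
      case False
      then show ?thesis using sQ unfolding \<rho>_def Q_def C_def by auto
    qed
  qed
  have decnn: "x \<in> B \<Longrightarrow> 0 \<le> dec x k e" for x k e
    unfolding dec_def B_def using idxC by auto
  define F where "F = (\<lambda>x. enc (\<Phi> (\<rho> (dec x))))"
  have FB: "F ` B \<subseteq> B"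
  proof
    fix y assume "y \<in> F ` B"
    then obtain x where x: "x \<in> B" "y = F x" by blast
    have "\<rho> (dec x) \<in> Q" using rhoQ decnn[OF x(1)] by blast
    then have "\<Phi> (\<rho> (dec x)) \<in> Q" using mapsQ by blast
    then show "y \<in> B" using encB x(2) unfolding F_def by blast
  qed
  have cdec: "continuous_on UNIV dec"
    unfolding dec_def
  proof (intro continuous_on_coordinatewise_then_product)
    fix k e show "continuous_on UNIV (\<lambda>x::nat\<Rightarrow>real. if (k, e) \<in> C then x (idx (k, e)) else 0)"
      by (cases "(k, e) \<in> C") (simp_all add: cc1)
  qed
  have crho: "continuous_on UNIV \<rho>"
    unfolding \<rho>_def
  proof (intro continuous_on_coordinatewise_then_product)
    fix k e
    show "continuous_on UNIV (\<lambda>\<sigma>::'k\<Rightarrow>'e\<Rightarrow>real. if (k, e) \<in> C then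
      (\<sigma> k e + max 0 (1 - ssum \<sigma> k) / real (card (E k))) / max 1 (ssum \<sigma> k) else 0)"
    proof (cases "(k, e) \<in> C")
      case True
      then have kK: "k \<in> K" unfolding C_def by auto
      have cpos: "0 < card (E k)" using finE[OF kK] neE[OF kK] by (simp add: card_gt_0_iff)
      have "continuous_on UNIV (\<lambda>\<sigma>::'k\<Rightarrow>'e\<Rightarrow>real. (\<sigma> k e + max 0 (1 - ssum \<sigma> k) / real (card (E k))) / max 1 (ssum \<sigma> k))"
        unfolding ssum_def
        by (intro continuous_on_divide continuous_on_add continuous_on_max continuous_on_diff continuous_on_const continuous_on_sum cc2) (simp_all add: cpos max_def)
      then show ?thesis using True by simp
    qed simp
  qed
  have cenc: "continuous_on UNIV enc"
    unfolding enc_def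
  proof (intro continuous_on_coordinatewise_then_product)
    fix j show "continuous_on UNIV (\<lambda>\<sigma>::'k\<Rightarrow>'e\<Rightarrow>real. if j < m then \<sigma> (fst (h j)) (snd (h j)) else 0)"
      by (cases "j < m") (simp_all add: cc2)
  qed
  have cF: "continuous_on B F"
    unfolding F_def
  proof (rule continuous_on_compose2[OF cenc _ subset_UNIV])
    show "continuous_on B (\<lambda>x. \<Phi> (\<rho> (dec x)))"
    proof (rule continuous_on_compose2[OF contQ])
      show "continuous_on B (\<lambda>x. \<rho> (dec x))"
        by (rule continuous_on_compose2[OF crho _ subset_UNIV]) (rule continuous_on_subset[OF cdec subset_UNIV])
      show "(\<lambda>x. \<rho> (dec x)) ` B \<subseteq> Q"
        using rhoQ decnn by blast
    qed
  qed
  have bb: "\<exists>x\<in>B. F x = x" using brouwer_box[of m F, folded B_def, OF cF FB] .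
  then obtain x where x: "x \<in> B" "F x = x" by blast
  define \<sigma> where "\<sigma> = \<Phi> (\<rho> (dec x))"
  have "\<rho> (dec x) \<in> Q" using rhoQ decnn[OF x(1)] by blast
  then have sQ: "\<sigma> \<in> Q" using mapsQ unfolding \<sigma>_def by blast
  have ex: "enc \<sigma> = x" using x(2) unfolding F_def \<sigma>_def .
  have dx: "dec x = \<sigma>" using decenc[OF sQ] unfolding ex .
  have rx: "\<rho> (dec x) = \<sigma>" unfolding dx by (rule rhoid[OF sQ])
  have "\<Phi> \<sigma> = \<sigma>" using \<sigma>_def[unfolded rx] by (rule sym)
  then show ?thesis using sQ unfolding Q_def by (intro bexI[of _ \<sigma>])
qed

lemma nash_core:
  fixes p u g :: "'x \<Rightarrow> real"
  assumes fin: "finite X" and pd: "is_dist X p"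
    and gdef: "\<And>x. g x = max 0 (u x - (\<Sum>y\<in>X. p y * u y))"
    and fp: "\<And>x. x \<in> X \<Longrightarrow> p x = (p x + g x) / (1 + (\<Sum>y\<in>X. g y))"
  shows "\<forall>x\<in>X. u x \<le> (\<Sum>y\<in>X. p y * u y)"
proof -
  define V where "V = (\<Sum>y\<in>X. p y * u y)"
  define G where "G = (\<Sum>y\<in>X. g y)"
  have p0: "\<And>x. x \<in> X \<Longrightarrow> 0 \<le> p x" and p1: "sum p X = 1" using pd unfolding is_dist_def by auto
  have g0: "\<And>x. 0 \<le> g x" using gdef by simp
  have G0: "0 \<le> G" unfolding G_def by (intro sum_nonneg g0)
  have gx: "g x = p x * G" if "x \<in> X" for x
  proof -
    have d: "1 + G \<noteq> 0" using G0 by simp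
    have f1: "p x = (p x + g x) / (1 + G)" using fp[OF that] unfolding G_def .
    have "p x * (1 + G) = (p x + g x) / (1 + G) * (1 + G)"
      using arg_cong[OF f1, of "\<lambda>z. z * (1 + G)"] .
    also have "\<dots> = p x + g x" using d by simp
    finally have "p x * (1 + G) = p x + g x" .
    then have "p x + p x * G = p x + g x" by (simp only: distrib_left mult_1_right)
    then show ?thesis by simp
  qed
  have "G = 0"
  proof (rule ccontr)
    assume "G \<noteq> 0" then have Gp: "G > 0" using G0 by simp
    have trm: "p x * (u x - V) = p x ^ 2 * G" if "x \<in> X" for x
    proof (cases "p x = 0")
      case False
      then have "p x > 0" using p0[OF that] by simp
      then have "g x > 0" using gx[OF that] Gp by simp
      have e: "g x = max 0 (u x - V)" using gdef[of x] unfolding V_def .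
      have "u x - V = g x"
      proof (cases "u x - V \<le> 0")
        case True
        then have "g x = 0" unfolding e by (rule max_absorb1)
        then show ?thesis using \<open>g x > 0\<close> by simp
      next
        case False
        then show ?thesis unfolding e by (simp add: max_absorb2)
      qed
      then show ?thesis using gx[OF that] by (simp add: power2_eq_square)
    qed simp
    have "(\<Sum>x\<in>X. p x * (u x - V)) = (\<Sum>x\<in>X. p x * u x) - (\<Sum>x\<in>X. p x) * V"
      by (simp add: right_diff_distrib sum_subtractf sum_distrib_right)
    also have "\<dots> = V - V * sum p X" unfolding V_def by simp
    also have "\<dots> = 0" using p1 by simp
    finally have A0: "(\<Sum>x\<in>X. p x * (u x - V)) = 0" .
    have "(\<Sum>x\<in>X. p x * (u x - V)) = (\<Sum>x\<in>X. p x ^ 2 * G)" by (rule sum.cong[OF refl trm])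
    then have "(\<Sum>x\<in>X. p x ^ 2 * G) = 0" using A0 by simp
    then have "(\<Sum>x\<in>X. p x ^ 2) * G = 0" by (simp only: sum_distrib_right)
    then have s0: "(\<Sum>x\<in>X. p x ^ 2) = 0" using Gp by simp
    have "\<forall>x\<in>X. p x ^ 2 = 0" using sum_nonneg_eq_0_iff[OF fin, of "\<lambda>x. p x ^ 2"] s0 by simp
    then have "sum p X = 0" by simp
    then show False using p1 by simp
  qed
  then have "\<forall>x\<in>X. g x = 0" using gx by simp
  then show ?thesis using gdef unfolding V_def by (metis diff_le_0_iff_le max.absorb_iff1 max.commute)
qed

lemma prod_upd:
  fixes h :: "'i::finite \<Rightarrow> real"
  shows "(\<Prod>j\<in>UNIV. (h(i := y)) j) = y * (\<Prod>j\<in>UNIV - {i}. h j)"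
proof -
  have "(\<Prod>j\<in>UNIV. (h(i := y)) j) = (h(i := y)) i * (\<Prod>j\<in>UNIV - {i}. (h(i := y)) j)"
    by (rule prod.remove) auto
  also have "(\<Prod>j\<in>UNIV - {i}. (h(i := y)) j) = (\<Prod>j\<in>UNIV - {i}. h j)"
    by (rule prod.cong) auto
  finally show ?thesis by simp
qed

lemma linA:
  fixes lam :: "'i::finite \<Rightarrow> 'st::metric_space \<Rightarrow> real"
  assumes finB: "finite (pball S s \<epsilon>)" and finA: "\<And>j. finite (As j)"
  shows "\<exists>C. \<forall>l. efg_J S As r p v Bs f \<epsilon> s i (lam(i := l)) chi = (\<Sum>t\<in>pball S s \<epsilon>. l t * C t)"
proof -
  define Bl where "Bl = pball S s \<epsilon>"
  define P where "P = Pi\<^sub>E (UNIV::'i set) (\<lambda>_. Bl)"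
  define PA where "PA = Pi\<^sub>E (UNIV::'i set) As"
  define g where "g = efg_payoff S r p v Bs f s i"
  define X where "X = (\<lambda>st. \<Sum>a\<in>PA. (\<Prod>j\<in>UNIV - {i}. lam j (st j)) * (\<Prod>j\<in>UNIV. chi j (st j) (a j)) * g st a)"
  have finP: "finite P" unfolding P_def Bl_def using finB by (intro finite_PiE) auto
  have e1: "efg_J S As r p v Bs f \<epsilon> s i (lam(i := l)) chi = (\<Sum>st\<in>P. l (st i) * X st)" for l
  proof -
    have "(\<Prod>j\<in>UNIV. (lam(i := l)) j (st j)) = l (st i) * (\<Prod>j\<in>UNIV - {i}. lam j (st j))" for st
    proof -
      have "(\<Prod>j\<in>UNIV. (lam(i := l)) j (st j)) = (lam(i := l)) i (st i) * (\<Prod>j\<in>UNIV - {i}. (lam(i := l)) j (st j))"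
        by (rule prod.remove) auto
      also have "(\<Prod>j\<in>UNIV - {i}. (lam(i := l)) j (st j)) = (\<Prod>j\<in>UNIV - {i}. lam j (st j))"
        by (rule prod.cong) auto
      finally show ?thesis by simp
    qed
    note pe = this
    have "efg_J S As r p v Bs f \<epsilon> s i (lam(i := l)) chi =
      (\<Sum>st\<in>P. \<Sum>a\<in>PA. (\<Prod>j\<in>UNIV. (lam(i := l)) j (st j)) * (\<Prod>j\<in>UNIV. chi j (st j) (a j)) * g st a)"
      by (simp only: efg_J_def P_def PA_def g_def Bl_def)
    also have "\<dots> = (\<Sum>st\<in>P. \<Sum>a\<in>PA. l (st i) * ((\<Prod>j\<in>UNIV - {i}. lam j (st j)) * (\<Prod>j\<in>UNIV. chi j (st j) (a j)) * g st a))"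
      by (simp only: pe mult.assoc)
    also have "\<dots> = (\<Sum>st\<in>P. l (st i) * X st)"
      unfolding X_def by (simp only: sum_distrib_left)
    finally show ?thesis .
  qed
  have e2: "(\<Sum>st\<in>P. l (st i) * X st) = (\<Sum>t\<in>Bl. l t * (\<Sum>st\<in>{st\<in>P. st i = t}. X st))" for l
  proof -
    have "(\<Sum>st\<in>P. l (st i) * X st) = (\<Sum>t\<in>Bl. \<Sum>st\<in>{st\<in>P. st i = t}. l (st i) * X st)"
    proof (rule sum.group[symmetric])
      show "finite P" by (rule finP)
      show "finite Bl" using finB unfolding Bl_def .
      show "(\<lambda>st. st i) ` P \<subseteq> Bl" unfolding P_def by (auto simp: PiE_def Pi_def)
    qed
    also have "\<dots> = (\<Sum>t\<in>Bl. l t * (\<Sum>st\<in>{st\<in>P. st i = t}. X st))"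
      by (rule sum.cong) (auto simp: sum_distrib_left)
    finally show ?thesis .
  qed
  show ?thesis
  proof (intro exI allI)
    fix l show "efg_J S As r p v Bs f \<epsilon> s i (lam(i := l)) chi = (\<Sum>t\<in>pball S s \<epsilon>. l t * (\<Sum>st\<in>{st\<in>P. st i = t}. X st))"
      using e1 e2 unfolding Bl_def by simp
  qed
qed

lemma linB:
  fixes lam :: "'i::finite \<Rightarrow> 'st::metric_space \<Rightarrow> real"
  assumes finB: "finite (pball S s \<epsilon>)" and finA: "\<And>j. finite (As j)"
  shows "\<exists>C. \<forall>w. efg_J S As r p v Bs f \<epsilon> s i lam (chi(i := w)) = (\<Sum>t\<in>pball S s \<epsilon>. \<Sum>b\<in>As i. w t b * C t b)"
proof -
  define Bl where "Bl = pball S s \<epsilon>"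
  define P where "P = Pi\<^sub>E (UNIV::'i set) (\<lambda>_. Bl)"
  define PA where "PA = Pi\<^sub>E (UNIV::'i set) As"
  define g where "g = efg_payoff S r p v Bs f s i"
  define Y where "Y = (\<lambda>st a. (\<Prod>j\<in>UNIV. lam j (st j)) * (\<Prod>j\<in>UNIV - {i}. chi j (st j) (a j)) * g st a)"
  have finP: "finite P" unfolding P_def Bl_def using finB by (intro finite_PiE) auto
  have finPA: "finite PA" unfolding PA_def using finA by (intro finite_PiE) auto
  have e1: "efg_J S As r p v Bs f \<epsilon> s i lam (chi(i := w)) = (\<Sum>st\<in>P. \<Sum>a\<in>PA. w (st i) (a i) * Y st a)" for w
  proof -
    have pe: "(\<Prod>j\<in>UNIV. (chi(i := w)) j (st j) (a j)) = w (st i) (a i) * (\<Prod>j\<in>UNIV - {i}. chi j (st j) (a j))" for st a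
    proof -
      have "(\<Prod>j\<in>UNIV. (chi(i := w)) j (st j) (a j)) = (chi(i := w)) i (st i) (a i) * (\<Prod>j\<in>UNIV - {i}. (chi(i := w)) j (st j) (a j))"
        by (rule prod.remove) auto
      also have "(\<Prod>j\<in>UNIV - {i}. (chi(i := w)) j (st j) (a j)) = (\<Prod>j\<in>UNIV - {i}. chi j (st j) (a j))"
        by (rule prod.cong) auto
      finally show ?thesis by simp
    qed
    have "efg_J S As r p v Bs f \<epsilon> s i lam (chi(i := w)) =
      (\<Sum>st\<in>P. \<Sum>a\<in>PA. (\<Prod>j\<in>UNIV. lam j (st j)) * (\<Prod>j\<in>UNIV. (chi(i := w)) j (st j) (a j)) * g st a)"
      by (simp only: efg_J_def P_def PA_def g_def Bl_def)
    also have "\<dots> = (\<Sum>st\<in>P. \<Sum>a\<in>PA. w (st i) (a i) * Y st a)"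
      unfolding Y_def pe by (simp only: mult.assoc mult.left_commute)
    finally show ?thesis .
  qed
  define C where "C = (\<lambda>t b. \<Sum>q\<in>{q\<in>P \<times> PA. (fst q i, snd q i) = (t, b)}. Y (fst q) (snd q))"
  have e2: "(\<Sum>st\<in>P. \<Sum>a\<in>PA. w (st i) (a i) * Y st a) = (\<Sum>t\<in>Bl. \<Sum>b\<in>As i. w t b * C t b)" for w
  proof -
    have "(\<Sum>st\<in>P. \<Sum>a\<in>PA. w (st i) (a i) * Y st a) = (\<Sum>q\<in>P \<times> PA. w (fst q i) (snd q i) * Y (fst q) (snd q))"
      by (simp add: sum.cartesian_product case_prod_beta)
    also have "\<dots> = (\<Sum>z\<in>Bl \<times> As i. \<Sum>q\<in>{q\<in>P \<times> PA. (fst q i, snd q i) = z}. w (fst q i) (snd q i) * Y (fst q) (snd q))"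
    proof (rule sum.group[symmetric])
      show "finite (P \<times> PA)" using finP finPA by simp
      show "finite (Bl \<times> As i)" using finB finA unfolding Bl_def by simp
      show "(\<lambda>q. (fst q i, snd q i)) ` (P \<times> PA) \<subseteq> Bl \<times> As i" unfolding P_def PA_def by (auto simp: PiE_def Pi_def)
    qed
    also have "\<dots> = (\<Sum>z\<in>Bl \<times> As i. w (fst z) (snd z) * C (fst z) (snd z))"
    proof (rule sum.cong[OF refl])
      fix z :: "'st \<times> 'a" assume "z \<in> Bl \<times> As i"
      have "(\<Sum>q\<in>{q\<in>P \<times> PA. (fst q i, snd q i) = z}. w (fst q i) (snd q i) * Y (fst q) (snd q))
          = (\<Sum>q\<in>{q\<in>P \<times> PA. (fst q i, snd q i) = z}. w (fst z) (snd z) * Y (fst q) (snd q))"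
        by (rule sum.cong) auto
      then show "(\<Sum>q\<in>{q\<in>P \<times> PA. (fst q i, snd q i) = z}. w (fst q i) (snd q i) * Y (fst q) (snd q))
          = w (fst z) (snd z) * C (fst z) (snd z)"
        unfolding C_def by (simp add: sum_distrib_left)
    qed
    also have "\<dots> = (\<Sum>t\<in>Bl. \<Sum>b\<in>As i. w t b * C t b)"
      by (simp add: sum.cartesian_product case_prod_beta)
    finally show ?thesis .
  qed
  show ?thesis
  proof (intro exI allI)
    fix w show "efg_J S As r p v Bs f \<epsilon> s i lam (chi(i := w)) = (\<Sum>t\<in>pball S s \<epsilon>. \<Sum>b\<in>As i. w t b * C t b)"
      using e1 e2 unfolding Bl_def by simp
  qed
qed


lemma dist_Inl: "is_dist (Inl ` X) h \<longleftrightarrow> is_dist X (\<lambda>t. h (Inl t))"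
proof -
  have "sum h (Inl ` X) = (\<Sum>t\<in>X. h (Inl t))" by (rule sum.reindex_cong[of Inl]) (auto simp: inj_on_def)
  then show ?thesis unfolding is_dist_def by auto
qed

lemma dist_Inr: "is_dist (Inr ` X) h \<longleftrightarrow> is_dist X (\<lambda>t. h (Inr t))"
proof -
  have "sum h (Inr ` X) = (\<Sum>t\<in>X. h (Inr t))" by (rule sum.reindex_cong[of Inr]) (auto simp: inj_on_def)
  then show ?thesis unfolding is_dist_def by auto
qed

lemma is_dist_cong:
  assumes "\<And>x. x \<in> X \<Longrightarrow> d x = d' x"
  shows "is_dist X d \<longleftrightarrow> is_dist X d'"
proof -
  have "sum d X = sum d' X" by (rule sum.cong) (simp_all add: assms)
  then show ?thesis unfolding is_dist_def using assms by auto
qed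

lemma nash_block:
  assumes fin: "finite X" and pd: "is_dist X p" and g0: "\<And>x. 0 \<le> g x"
  shows "is_dist X (\<lambda>x. (p x + g x) / (1 + sum g X))"
proof -
  have G0: "0 \<le> sum g X" by (intro sum_nonneg g0)
  have p0: "\<And>x. x \<in> X \<Longrightarrow> 0 \<le> p x" and p1: "sum p X = 1" using pd unfolding is_dist_def by auto
  have "(\<Sum>x\<in>X. (p x + g x) / (1 + sum g X)) = (\<Sum>x\<in>X. p x + g x) / (1 + sum g X)"
    by (rule sum_divide_distrib[symmetric])
  also have "(\<Sum>x\<in>X. p x + g x) = 1 + sum g X" using p1 by (simp only: sum.distrib)
  also have "(1 + sum g X) / (1 + sum g X) = 1" using G0 by simp
  finally have s: "(\<Sum>x\<in>X. (p x + g x) / (1 + sum g X)) = 1" .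
  have "\<forall>x\<in>X. 0 \<le> (p x + g x) / (1 + sum g X)"
  proof
    fix x assume "x \<in> X"
    then have "0 \<le> p x + g x" using p0 g0[of x] by simp
    then show "0 \<le> (p x + g x) / (1 + sum g X)" using G0 by simp
  qed
  then show ?thesis using s unfolding is_dist_def by simp
qed

lemma contJ:
  fixes L :: "'z::topological_space \<Rightarrow> 'i::finite \<Rightarrow> 'st::metric_space \<Rightarrow> real"
    and Ch :: "'z \<Rightarrow> 'i \<Rightarrow> 'st \<Rightarrow> 'a \<Rightarrow> real"
  assumes cL: "\<And>j u. continuous_on U (\<lambda>z. L z j u)"
    and cC: "\<And>j u b. continuous_on U (\<lambda>z. Ch z j u b)"
  shows "continuous_on U (\<lambda>z. efg_J S As r p v Bs f \<epsilon> s i (L z) (Ch z))"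
  unfolding efg_J_def
  by (intro continuous_on_sum continuous_on_mult continuous_on_prod continuous_on_const cL cC)

theorem lemma1:
  fixes S :: "'st::metric_space set"
    and As :: "'i::finite \<Rightarrow> 'a set"
    and Bs :: "'i \<Rightarrow> 'b set"
    and r :: "'i \<Rightarrow> 'st \<Rightarrow> ('i \<Rightarrow> 'a) \<Rightarrow> ('i \<Rightarrow> 'b) \<Rightarrow> real"
    and p :: "'st \<Rightarrow> ('i \<Rightarrow> 'a) \<Rightarrow> ('i \<Rightarrow> 'b) \<Rightarrow> 'st \<Rightarrow> real"
    and f :: "'st \<Rightarrow> 'b \<Rightarrow> 'st"
    and v :: "'i \<Rightarrow> 'st \<Rightarrow> real"
    and \<epsilon> :: real
  assumes finS: "finite S"
    and finA: "\<And>i. finite (As i)"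
    and neA: "\<And>i. As i \<noteq> {}"
    and eps: "\<epsilon> > 0"
    and kernel: "\<And>s a b. s \<in> S \<Longrightarrow> a \<in> Pi\<^sub>E UNIV As \<Longrightarrow> b \<in> Pi\<^sub>E UNIV Bs \<Longrightarrow>
                   (\<forall>s'\<in>S. 0 \<le> p s a b s') \<and> (\<Sum>s'\<in>S. p s a b s') = 1"
    and finj: "\<And>s. s \<in> S \<Longrightarrow> inj_on (fjoint f s) (Pi\<^sub>E UNIV Bs)"
    and fsurj: "\<And>s. s \<in> S \<Longrightarrow> Pi\<^sub>E UNIV (\<lambda>_. pball S s \<epsilon>) \<subseteq> fjoint f s ` Pi\<^sub>E UNIV Bs"
    and veq: "\<And>i j. v i = v j"
  shows "\<forall>s\<in>S. \<exists>lam chi. efg_nash S As r p v Bs f \<epsilon> s lam chi"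
proof
  fix s assume sS: "s \<in> S"
  define Bl where "Bl = pball S s \<epsilon>"
  have finB: "finite Bl" unfolding Bl_def pball_def using finS by simp
  have sB: "s \<in> Bl" unfolding Bl_def pball_def using sS eps by simp
  define K :: "('i \<times> 'st option) set" where "K = UNIV \<times> insert None (Some ` Bl)"
  define E :: "'i \<times> 'st option \<Rightarrow> ('st + 'a) set"
    where "E = (\<lambda>k. case snd k of None \<Rightarrow> Inl ` Bl | Some t \<Rightarrow> Inr ` As (fst k))"
  define lamOf where "lamOf = (\<lambda>(\<sigma>::'i \<times> 'st option \<Rightarrow> 'st + 'a \<Rightarrow> real) i t. \<sigma> (i, None) (Inl t))"
  define chiOf where "chiOf = (\<lambda>(\<sigma>::'i \<times> 'st option \<Rightarrow> 'st + 'a \<Rightarrow> real) i t a. \<sigma> (i, Some t) (Inr a))"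
  define J where "J = (\<lambda>i lam chi. efg_J S As r p v Bs f \<epsilon> s i lam chi)"
  define dl where "dl = (\<lambda>(t::'st) u. if u = t then (1::real) else 0)"
  define da where "da = (\<lambda>(a::'a) b. if b = a then (1::real) else 0)"
  define gA where "gA = (\<lambda>\<sigma> i t. max 0 (J i (lamOf \<sigma>) (chiOf \<sigma>) - J i ((lamOf \<sigma>)(i := dl t)) (chiOf \<sigma>)))"
  define gB where "gB = (\<lambda>\<sigma> i t a. max 0 (J i (lamOf \<sigma>) ((chiOf \<sigma>)(i := (chiOf \<sigma> i)(t := da a))) - J i (lamOf \<sigma>) (chiOf \<sigma>)))"
  define \<Phi> where "\<Phi> = (\<lambda>(\<sigma>::'i \<times> 'st option \<Rightarrow> 'st + 'a \<Rightarrow> real) k e. case k of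
       (i, None) \<Rightarrow> (case e of Inl t \<Rightarrow> if t \<in> Bl then (\<sigma> k e + gA \<sigma> i t) / (1 + (\<Sum>u\<in>Bl. gA \<sigma> i u)) else 0 | Inr _ \<Rightarrow> 0)
     | (i, Some t) \<Rightarrow> (case e of Inl _ \<Rightarrow> 0 | Inr a \<Rightarrow> if t \<in> Bl \<and> a \<in> As i then (\<sigma> k e + gB \<sigma> i t a) / (1 + (\<Sum>b\<in>As i. gB \<sigma> i t b)) else 0))"
  define Q where "Q = {\<sigma>. (\<forall>k\<in>K. is_dist (E k) (\<sigma> k)) \<and> (\<forall>k e. \<not>(k \<in> K \<and> e \<in> E k) \<longrightarrow> \<sigma> k e = 0)}"
  have \<Phi>1: "\<Phi> \<sigma> (i, None) (Inl t) = (if t \<in> Bl then (\<sigma> (i, None) (Inl t) + gA \<sigma> i t) / (1 + (\<Sum>u\<in>Bl. gA \<sigma> i u)) else 0)"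
    for \<sigma> i t unfolding \<Phi>_def by simp
  have \<Phi>2: "\<Phi> \<sigma> (i, None) (Inr a) = 0" for \<sigma> i a unfolding \<Phi>_def by simp
  have \<Phi>3: "\<Phi> \<sigma> (i, Some t) (Inl u) = 0" for \<sigma> i t u unfolding \<Phi>_def by simp
  have \<Phi>4: "\<Phi> \<sigma> (i, Some t) (Inr a) = (if t \<in> Bl \<and> a \<in> As i then (\<sigma> (i, Some t) (Inr a) + gB \<sigma> i t a) / (1 + (\<Sum>b\<in>As i. gB \<sigma> i t b)) else 0)"
    for \<sigma> i t a unfolding \<Phi>_def by simp
  have finK: "finite K" unfolding K_def using finB by simp
  have finE: "finite (E k)" if "k \<in> K" for k
    using that finB finA unfolding K_def E_def by (auto split: option.splits)
  have neE: "E k \<noteq> {}" if "k \<in> K" for k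
    using that sB neA unfolding K_def E_def by (auto split: option.splits)
  have gA0: "0 \<le> gA \<sigma> i t" for \<sigma> i t unfolding gA_def by simp
  have gB0: "0 \<le> gB \<sigma> i t a" for \<sigma> i t a unfolding gB_def by simp
  have cJ: "continuous_on UNIV (\<lambda>\<sigma>. J i (L \<sigma>) (Ch \<sigma>))"
    if "\<And>j u. continuous_on UNIV (\<lambda>\<sigma>. L \<sigma> j u)" "\<And>j u b. continuous_on UNIV (\<lambda>\<sigma>. Ch \<sigma> j u b)"
    for i and L :: "('i \<times> 'st option \<Rightarrow> 'st + 'a \<Rightarrow> real) \<Rightarrow> 'i \<Rightarrow> 'st \<Rightarrow> real" and Ch
    unfolding J_def by (rule contJ[OF that])
  have cL1: "continuous_on UNIV (\<lambda>\<sigma>. lamOf \<sigma> j u)" for j u unfolding lamOf_def by (simp add: cc2)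
  have cC1: "continuous_on UNIV (\<lambda>\<sigma>. chiOf \<sigma> j u b)" for j u b unfolding chiOf_def by (simp add: cc2)
  have cL2: "continuous_on UNIV (\<lambda>\<sigma>. ((lamOf \<sigma>)(i := dl t)) j u)" for i t j u
    by (cases "j = i") (simp_all add: cL1)
  have cC2: "continuous_on UNIV (\<lambda>\<sigma>. ((chiOf \<sigma>)(i := (chiOf \<sigma> i)(t := da a))) j u b)" for i t a j u b
  proof (cases "j = i")
    case True
    then show ?thesis by (cases "u = t") (simp_all add: cC1)
  qed (simp add: cC1)
  have cgA: "continuous_on UNIV (\<lambda>\<sigma>. gA \<sigma> i t)" for i t
    unfolding gA_def by (intro continuous_on_max continuous_on_const continuous_on_diff cJ cL1 cL2 cC1)
  have cgB: "continuous_on UNIV (\<lambda>\<sigma>. gB \<sigma> i t a)" for i t a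
    unfolding gB_def by (intro continuous_on_max continuous_on_const continuous_on_diff cJ cL1 cC2 cC1)
  have cPhi: "continuous_on UNIV \<Phi>"
  proof (intro continuous_on_coordinatewise_then_product)
    fix k :: "'i \<times> 'st option" and e :: "'st + 'a"
    obtain i ko where k: "k = (i, ko)" by (cases k)
    show "continuous_on UNIV (\<lambda>\<sigma>. \<Phi> \<sigma> k e)"
    proof (cases ko)
      case None
      show ?thesis
      proof (cases e)
        case (Inl t)
        show ?thesis
        proof (cases "t \<in> Bl")
          case True
          have d: "\<forall>\<sigma>\<in>UNIV. 1 + (\<Sum>u\<in>Bl. gA \<sigma> i u) \<noteq> 0"
            using gA0 by (metis add_nonneg_eq_0_iff sum_nonneg zero_le_one one_neq_zero)
          have "continuous_on UNIV (\<lambda>\<sigma>. (\<sigma> (i, None) (Inl t) + gA \<sigma> i t) / (1 + (\<Sum>u\<in>Bl. gA \<sigma> i u)))"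
            by (intro continuous_on_divide continuous_on_add continuous_on_const continuous_on_sum cc2 cgA d)
          then show ?thesis unfolding k None Inl \<Phi>1 using True by simp
        next
          case False then show ?thesis unfolding k None Inl \<Phi>1 by simp
        qed
      next
        case (Inr a) then show ?thesis unfolding k None Inr \<Phi>2 by simp
      qed
    next
      case (Some t)
      show ?thesis
      proof (cases e)
        case (Inl u) then show ?thesis unfolding k Some Inl \<Phi>3 by simp
      next
        case (Inr a)
        show ?thesis
        proof (cases "t \<in> Bl \<and> a \<in> As i")
          case True
          have d: "\<forall>\<sigma>\<in>UNIV. 1 + (\<Sum>b\<in>As i. gB \<sigma> i t b) \<noteq> 0"
            using gB0 by (metis add_nonneg_eq_0_iff sum_nonneg zero_le_one one_neq_zero)
          have "continuous_on UNIV (\<lambda>\<sigma>. (\<sigma> (i, Some t) (Inr a) + gB \<sigma> i t a) / (1 + (\<Sum>b\<in>As i. gB \<sigma> i t b)))"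
            by (intro continuous_on_divide continuous_on_add continuous_on_const continuous_on_sum cc2 cgB d)
          then show ?thesis unfolding k Some Inr \<Phi>4 using True by simp
        next
          case False then show ?thesis unfolding k Some Inr \<Phi>4 if_not_P[OF False] by simp
        qed
      qed
    qed
  qed
  have contQ: "continuous_on Q \<Phi>" by (rule continuous_on_subset[OF cPhi subset_UNIV])
  have mapsQ: "\<Phi> ` Q \<subseteq> Q"
  proof
    fix \<tau> assume "\<tau> \<in> \<Phi> ` Q"
    then obtain \<sigma> where sQ: "\<sigma> \<in> Q" and \<tau>: "\<tau> = \<Phi> \<sigma>" by blast
    have sd: "is_dist (E k) (\<sigma> k)" if "k \<in> K" for k using sQ that unfolding Q_def by blast
    have d1: "is_dist (E k) (\<Phi> \<sigma> k)" if kK: "k \<in> K" for k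
    proof -
      obtain i ko where k: "k = (i, ko)" by (cases k)
      show ?thesis
      proof (cases ko)
        case None
        have Ek: "E k = Inl ` Bl" unfolding k None E_def by simp
        have "is_dist Bl (\<lambda>t. \<sigma> (i, None) (Inl t))" using sd[OF kK] unfolding Ek dist_Inl unfolding k None .
        then have "is_dist Bl (\<lambda>t. (\<sigma> (i, None) (Inl t) + gA \<sigma> i t) / (1 + sum (gA \<sigma> i) Bl))"
          by (rule nash_block[OF finB _ gA0])
        then have "is_dist Bl (\<lambda>t. \<Phi> \<sigma> (i, None) (Inl t))"
          by (subst is_dist_cong[where d'="\<lambda>t. (\<sigma> (i, None) (Inl t) + gA \<sigma> i t) / (1 + sum (gA \<sigma> i) Bl)"]) (simp_all add: \<Phi>1)
        then show ?thesis unfolding Ek dist_Inl unfolding k None .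
      next
        case (Some t)
        have tB: "t \<in> Bl" using kK unfolding k Some K_def by auto
        have Ek: "E k = Inr ` As i" unfolding k Some E_def by simp
        have "is_dist (As i) (\<lambda>a. \<sigma> (i, Some t) (Inr a))" using sd[OF kK] unfolding Ek dist_Inr unfolding k Some .
        then have "is_dist (As i) (\<lambda>a. (\<sigma> (i, Some t) (Inr a) + gB \<sigma> i t a) / (1 + sum (gB \<sigma> i t) (As i)))"
          by (rule nash_block[OF finA _ gB0])
        then have "is_dist (As i) (\<lambda>a. \<Phi> \<sigma> (i, Some t) (Inr a))"
          by (subst is_dist_cong[where d'="\<lambda>a. (\<sigma> (i, Some t) (Inr a) + gB \<sigma> i t a) / (1 + sum (gB \<sigma> i t) (As i))"]) (simp_all add: \<Phi>4 tB)
        then show ?thesis unfolding Ek dist_Inr unfolding k Some .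
      qed
    qed
    have d2: "\<Phi> \<sigma> k e = 0" if ne: "\<not> (k \<in> K \<and> e \<in> E k)" for k e
    proof -
      obtain i ko where k: "k = (i, ko)" by (cases k)
      show ?thesis
      proof (cases ko)
        case None
        show ?thesis
        proof (cases e)
          case (Inl t)
          have "t \<notin> Bl" using ne unfolding k None Inl K_def E_def by auto
          then show ?thesis unfolding k None Inl \<Phi>1 by simp
        next
          case (Inr a) then show ?thesis unfolding k None Inr \<Phi>2 by simp
        qed
      next
        case (Some t)
        show ?thesis
        proof (cases e)
          case (Inl u) then show ?thesis unfolding k Some Inl \<Phi>3 by simp
        next
          case (Inr a)
          have "\<not> (t \<in> Bl \<and> a \<in> As i)" using ne unfolding k Some Inr K_def E_def by auto
          then show ?thesis unfolding k Some Inr \<Phi>4 if_not_P[OF \<open>\<not> (t \<in> Bl \<and> a \<in> As i)\<close>] by simp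
        qed
      qed
    qed
    show "\<tau> \<in> Q" unfolding \<tau> Q_def using d1 d2 by blast
  qed
  obtain \<sigma> where sQ: "\<sigma> \<in> Q" and fix\<sigma>: "\<Phi> \<sigma> = \<sigma>"
    using fixpoint_simplices[of K E \<Phi>, OF finK finE neE contQ[unfolded Q_def] mapsQ[unfolded Q_def]]
    unfolding Q_def[symmetric] by blast
  define lam where "lam = lamOf \<sigma>"
  define chi where "chi = chiOf \<sigma>"
  have finB': "finite (pball S s \<epsilon>)" using finB unfolding Bl_def .
  have sd: "is_dist (E k) (\<sigma> k)" if "k \<in> K" for k using sQ that unfolding Q_def by blast
  have lamd: "is_dist Bl (lam i)" for i
  proof -
    have "(i, None) \<in> K" unfolding K_def by simp
    then have "is_dist (E (i, None)) (\<sigma> (i, None))" by (rule sd)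
    then have "is_dist (Inl ` Bl) (\<sigma> (i, None))" unfolding E_def by simp
    then have "is_dist Bl (\<lambda>t. \<sigma> (i, None) (Inl t))" unfolding dist_Inl .
    moreover have "lam i = (\<lambda>t. \<sigma> (i, None) (Inl t))" unfolding lam_def lamOf_def by simp
    ultimately show ?thesis by simp
  qed
  have chid: "is_dist (As i) (chi i t)" if tB: "t \<in> Bl" for i t
  proof -
    have "(i, Some t) \<in> K" unfolding K_def using tB by simp
    then have "is_dist (E (i, Some t)) (\<sigma> (i, Some t))" by (rule sd)
    then have "is_dist (Inr ` As i) (\<sigma> (i, Some t))" unfolding E_def by simp
    then have "is_dist (As i) (\<lambda>a. \<sigma> (i, Some t) (Inr a))" unfolding dist_Inr .
    moreover have "chi i t = (\<lambda>a. \<sigma> (i, Some t) (Inr a))" unfolding chi_def chiOf_def by simp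
    ultimately show ?thesis by simp
  qed
  have fixA: "lam i t = (lam i t + gA \<sigma> i t) / (1 + (\<Sum>u\<in>Bl. gA \<sigma> i u))" if tB: "t \<in> Bl" for i t
  proof -
    have "\<Phi> \<sigma> (i, None) (Inl t) = \<sigma> (i, None) (Inl t)" using fix\<sigma> by simp
    then show ?thesis unfolding \<Phi>1 if_P[OF tB] lam_def lamOf_def by simp
  qed
  have fixB: "chi i t a = (chi i t a + gB \<sigma> i t a) / (1 + (\<Sum>b\<in>As i. gB \<sigma> i t b))" if tB: "t \<in> Bl" and aA: "a \<in> As i" for i t a
  proof -
    have c: "t \<in> Bl \<and> a \<in> As i" using tB aA by simp
    have "\<Phi> \<sigma> (i, Some t) (Inr a) = \<sigma> (i, Some t) (Inr a)" using fix\<sigma> by simp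
    then show ?thesis unfolding \<Phi>4 if_P[OF c] chi_def chiOf_def by simp
  qed
  have gAe: "gA \<sigma> i t = max 0 (J i lam chi - J i (lam(i := dl t)) chi)" for i t
    unfolding gA_def lam_def chi_def ..
  have gBe: "gB \<sigma> i t a = max 0 (J i lam (chi(i := (chi i)(t := da a))) - J i lam chi)" for i t a
    unfolding gB_def lam_def chi_def ..
  have adv: "J i lam chi \<le> J i (lam(i := l)) chi" if ld: "is_dist Bl l" for i l
  proof -
    obtain C where C: "\<forall>l. J i (lam(i := l)) chi = (\<Sum>t\<in>Bl. l t * C t)"
      using linA[where lam=lam and chi=chi and i=i and As=As and r=r and p=p and v=v and Bs=Bs and f=f, OF finB' finA] unfolding J_def Bl_def by blast
    have J0: "J i lam chi = (\<Sum>t\<in>Bl. lam i t * C t)" using C[rule_format, of "lam i"] by simp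
    have Jd: "J i (lam(i := dl u)) chi = C u" if uB: "u \<in> Bl" for u
    proof -
      have "(\<Sum>t\<in>Bl. dl u t * C t) = (\<Sum>t\<in>Bl. if t = u then C t else 0)"
        by (rule sum.cong) (simp_all add: dl_def)
      also have "\<dots> = C u" using finB uB by simp
      finally show ?thesis using C by simp
    qed
    define V where "V = (\<Sum>y\<in>Bl. lam i y * - C y)"
    have VJ: "V = - J i lam chi" unfolding V_def J0 by (simp add: sum_negf)
    have ge: "\<forall>t\<in>Bl. - C t \<le> (\<Sum>y\<in>Bl. lam i y * - C y)"
    proof (rule nash_core[OF finB lamd])
      show "max 0 (- C t - (\<Sum>y\<in>Bl. lam i y * - C y)) = max 0 (- C t - (\<Sum>y\<in>Bl. lam i y * - C y))" for t ..
      fix t assume tB: "t \<in> Bl"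
      have gg: "gA \<sigma> i u = max 0 (- C u - (\<Sum>y\<in>Bl. lam i y * - C y))" if "u \<in> Bl" for u
        unfolding gAe Jd[OF that] V_def[symmetric] VJ by simp
      have e1: "(\<Sum>u\<in>Bl. gA \<sigma> i u) = (\<Sum>u\<in>Bl. max 0 (- C u - (\<Sum>y\<in>Bl. lam i y * - C y)))"
        by (rule sum.cong[OF refl gg])
      have "lam i t = (lam i t + gA \<sigma> i t) / (1 + (\<Sum>u\<in>Bl. gA \<sigma> i u))" by (rule fixA[where i=i and t=t, OF tB])
      then show "lam i t = (lam i t + max 0 (- C t - (\<Sum>y\<in>Bl. lam i y * - C y))) /
            (1 + (\<Sum>u\<in>Bl. max 0 (- C u - (\<Sum>y\<in>Bl. lam i y * - C y))))"
        unfolding gg[OF tB] e1 .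
    qed
    have Ct: "J i lam chi \<le> C t" if "t \<in> Bl" for t using ge that unfolding V_def[symmetric] VJ by simp
    have l0: "\<And>t. t \<in> Bl \<Longrightarrow> 0 \<le> l t" and l1: "sum l Bl = 1" using ld unfolding is_dist_def by auto
    have "J i lam chi = (\<Sum>t\<in>Bl. l t * J i lam chi)" using l1 by (simp add: sum_distrib_right[symmetric])
    also have "\<dots> \<le> (\<Sum>t\<in>Bl. l t * C t)"
      by (rule sum_mono) (use l0 Ct in \<open>simp add: mult_left_mono\<close>)
    also have "\<dots> = J i (lam(i := l)) chi" using C by simp
    finally show ?thesis .
  qed
  have agt: "J i lam (chi(i := c)) \<le> J i lam chi" if cd: "\<forall>t\<in>Bl. is_dist (As i) (c t)" for i c
  proof -
    obtain CB where CB: "\<forall>w. J i lam (chi(i := w)) = (\<Sum>t\<in>Bl. \<Sum>b\<in>As i. w t b * CB t b)"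
      using linB[where lam=lam and chi=chi and i=i and As=As and r=r and p=p and v=v and Bs=Bs and f=f, OF finB' finA] unfolding J_def Bl_def by blast
    define R where "R = (\<lambda>t. \<Sum>b\<in>As i. chi i t b * CB t b)"
    have J0: "J i lam chi = (\<Sum>t\<in>Bl. R t)" using CB[rule_format, of "chi i"] unfolding R_def by simp
    have Jd: "J i lam (chi(i := (chi i)(t := da a))) = J i lam chi - R t + CB t a" if tB: "t \<in> Bl" and aA: "a \<in> As i" for t a
    proof -
      define F where "F = (\<lambda>t'. \<Sum>b\<in>As i. ((chi i)(t := da a)) t' b * CB t' b)"
      have "J i lam (chi(i := (chi i)(t := da a))) = (\<Sum>t'\<in>Bl. F t')" using CB unfolding F_def by simp
      also have "\<dots> = F t + (\<Sum>t'\<in>Bl - {t}. F t')" by (rule sum.remove[OF finB tB])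
      also have "F t = CB t a"
      proof -
        have "F t = (\<Sum>b\<in>As i. if b = a then CB t b else 0)" unfolding F_def
          by (rule sum.cong) (simp_all add: da_def)
        also have "\<dots> = CB t a" using finA aA by simp
        finally show ?thesis .
      qed
      also have "(\<Sum>t'\<in>Bl - {t}. F t') = (\<Sum>t'\<in>Bl - {t}. R t')"
        by (rule sum.cong) (simp_all add: F_def R_def)
      also have "(\<Sum>t'\<in>Bl - {t}. R t') = J i lam chi - R t"
        unfolding J0 using sum.remove[OF finB tB, of R] by simp
      finally show ?thesis by linarith
    qed
    have core: "\<forall>b\<in>As i. CB t b \<le> R t" if tB: "t \<in> Bl" for t
    proof -
      have "\<forall>b\<in>As i. CB t b \<le> (\<Sum>y\<in>As i. chi i t y * CB t y)"
      proof (rule nash_core[OF finA chid[OF tB]])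
        show "max 0 (CB t b - (\<Sum>y\<in>As i. chi i t y * CB t y)) = max 0 (CB t b - (\<Sum>y\<in>As i. chi i t y * CB t y))" for b ..
        fix a assume aA: "a \<in> As i"
        have gg: "gB \<sigma> i t b = max 0 (CB t b - (\<Sum>y\<in>As i. chi i t y * CB t y))" if "b \<in> As i" for b
          unfolding gBe Jd[OF tB that] R_def by simp
        have e1: "(\<Sum>b\<in>As i. gB \<sigma> i t b) = (\<Sum>b\<in>As i. max 0 (CB t b - (\<Sum>y\<in>As i. chi i t y * CB t y)))"
          by (rule sum.cong[OF refl gg])
        have "chi i t a = (chi i t a + gB \<sigma> i t a) / (1 + (\<Sum>b\<in>As i. gB \<sigma> i t b))" by (rule fixB[where i=i and t=t and a=a, OF tB aA])
        then show "chi i t a = (chi i t a + max 0 (CB t a - (\<Sum>y\<in>As i. chi i t y * CB t y))) /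
            (1 + (\<Sum>b\<in>As i. max 0 (CB t b - (\<Sum>y\<in>As i. chi i t y * CB t y))))"
          unfolding gg[OF aA] e1 .
      qed
      then show ?thesis unfolding R_def .
    qed
    have "J i lam (chi(i := c)) = (\<Sum>t\<in>Bl. \<Sum>b\<in>As i. c t b * CB t b)" using CB by simp
    also have "\<dots> \<le> (\<Sum>t\<in>Bl. \<Sum>b\<in>As i. c t b * R t)"
    proof (rule sum_mono)+
      fix t b assume tB: "t \<in> Bl" and bA: "b \<in> As i"
      have "0 \<le> c t b" using cd tB bA unfolding is_dist_def by blast
      then show "c t b * CB t b \<le> c t b * R t" using core[OF tB] bA by (simp add: mult_left_mono)
    qed
    also have "\<dots> = (\<Sum>t\<in>Bl. R t)"
    proof (rule sum.cong[OF refl])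
      fix t assume tB: "t \<in> Bl"
      have "sum (c t) (As i) = 1" using cd tB unfolding is_dist_def by blast
      then show "(\<Sum>b\<in>As i. c t b * R t) = R t" by (simp add: sum_distrib_right[symmetric])
    qed
    also have "\<dots> = J i lam chi" using J0 by simp
    finally show ?thesis .
  qed
  have "efg_nash S As r p v Bs f \<epsilon> s lam chi"
    unfolding efg_nash_def adv_strat_def agent_strat_def Bl_def[symmetric]
    using lamd chid adv agt unfolding J_def by blast
  then show "\<exists>lam chi. efg_nash S As r p v Bs f \<epsilon> s lam chi" by blast
qed

end
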